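(* Let $r$ be a non-negative integer. If $r\neq 0$, then $$\sum_{k = 1}^\infty \frac{(-1)^{k(r-1)} \big(\frac{27}{5}\big)^k}{k^2\binom{3k}k F_r^{2k} } = 6\arctan^2 \bigg(\frac{\sqrt 3 }{2\sqrt[3]{\alpha^{2r}} + (-1)^{r}} \bigg) - \frac{1}{2}\log ^2 \bigg( \frac{\sqrt 5\,\alpha ^r F_r }{\big(\sqrt[3]{\alpha^{2r}} - ( - 1)^{r} \big)^3 } \bigg),$$ and if $r\neq 1$, then $$\sum_{k = 1}^\infty \frac{( - 1)^{kr} 27^k }{k^2 \binom{3k}k L_r^{2k} } = 6\arctan ^2 \bigg( \frac{ \sqrt 3 }{2\sqrt[3]{\alpha^{2r}} - ( - 1)^r } \bigg) - \frac{1}{2}\log ^2\bigg( \frac{\alpha ^r L_r }{\big(\sqrt[3]{\alpha^{2r}} + ( - 1)^r \big)^3 } \bigg).$$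
   Context: $F_n$ and $L_n$ are the Fibonacci and Lucas numbers: $F_0=0$, $F_1=1$, $L_0=2$, $L_1=1$, and $X_n=X_{n-1}+X_{n-2}$ for both sequences. $\alpha=(1+\sqrt5)/2$ is the golden ratio. $\sqrt[3]{t}$ denotes the real cube root. *)

theory Defs
  imports "HOL-Analysis.Analysis" "HOL-Number_Theory.Fib"
begin

fun lucas :: "nat \<Rightarrow> nat" where
  "lucas 0 = 2"
| "lucas (Suc 0) = 1"
| "lucas (Suc (Suc n)) = lucas (Suc n) + lucas n"

definition golden_ratio :: real where
  "golden_ratio = (1 + sqrt 5) / 2"

end

theory Submission
  imports Defs "HOL-Analysis.Analysis"
begin

definition cP :: "nat \<Rightarrow> real" where
  "cP n = 1 / (real (Suc n) * real ((3 * Suc n) choose (Suc n)))"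

lemma cP_fact: "cP n = fact n * fact (2*n+2) / fact (3*n+3)"
proof -
  have "real ((3 * Suc n) choose (Suc n)) = fact (3*n+3) / (fact (Suc n) * fact (2*n+2))"
    by (subst binomial_fact) (auto simp: algebra_simps)
  then show ?thesis unfolding cP_def by (simp add: field_simps fact_Suc del: of_nat_Suc)
qed

lemma Beta_nat: "Beta (real (2*n+3)) (real (n+1)) = fact n * fact (2*n+2) / fact (3*n+3)"
proof -
  have g: "Gamma (real k + 1) = fact k" for k
    using Gamma_fact[of k] by (simp add: add.commute)
  have "Beta (real (2*n+3)) (real (n+1)) = Gamma (real (2*n+2) + 1) * Gamma (real n + 1) / Gamma (real (3*n+3) + 1)"
    unfolding Beta_def by (simp add: algebra_simps)
  then show ?thesis by (simp only: g) simp
qed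

lemma cP_integral: "((\<lambda>x. x^(2*n+2) * (1-x)^n) has_integral cP n) {0..1::real}"
proof -
  have h: "((\<lambda>x. x powr (real (2*n+3) - 1) * (1-x) powr (real (n+1) - 1)) has_integral cP n) {0..1}"
    using has_integral_Beta_real[of "real (2*n+3)" "real (n+1)", unfolded Beta_nat cP_fact[symmetric]] by simp
  show ?thesis
  proof (rule has_integral_spike_finite[OF _ _ h])
    show "finite {0::real, 1}" by simp
    fix x :: real assume "x \<in> {0..1} - {0,1}"
    then have "0 < x" "x < 1" by auto
    have e1: "real (2*n+3) - 1 = real (2*n+2)" "real (n+1) - 1 = real n" by simp_all
    show "x^(2*n+2) * (1-x)^n = x powr (real (2*n+3) - 1) * (1-x) powr (real (n+1) - 1)"
      using powr_realpow[OF \<open>0 < x\<close>, of "2*n+2"] powr_realpow[of "1-x" n] \<open>x < 1\<close> by (simp only: e1)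
  qed
qed

lemma poly_bound: "0 \<le> x \<Longrightarrow> x \<le> 1 \<Longrightarrow> x^2*(1-x) \<le> (4/27::real)"
proof -
  have "4/27 - x^2*(1-x) = (x-2/3)^2*(x+1/3)" by (simp add: power2_eq_square field_simps)
  moreover assume "0 \<le> x"
  then have "(x-2/3)^2*(x+1/3) \<ge> 0" by (intro mult_nonneg_nonneg) auto
  ultimately show "x^2*(1-x) \<le> 4/27" by linarith
qed

lemma cP_nonneg: "0 \<le> cP n" unfolding cP_def by simp

lemma cP_bound: "cP n \<le> (4/27)^n"
proof -
  have "cP n \<le> integral {0..1} (\<lambda>x::real. (4/27)^n)"
  proof -
    have "integral {0..1} (\<lambda>x::real. x^(2*n+2) * (1-x)^n) \<le> integral {0..1} (\<lambda>x::real. (4/27)^n)"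
    proof (rule integral_le)
      show "(\<lambda>x::real. x^(2*n+2) * (1-x)^n) integrable_on {0..1}" using cP_integral by blast
      show "(\<lambda>x::real. (4/27::real)^n) integrable_on {0..1}" by (rule integrable_const_ivl)
      fix x :: real assume x: "x \<in> {0..1}"
      have "x^(2*n+2) = x^2 * (x^2)^n" by (simp only: power_add power_mult) (simp add: mult.commute)
      then have "x^(2*n+2) * (1-x)^n = x^2 * (x^2*(1-x))^n"
        by (simp add: power_mult_distrib)
      also have "\<dots> \<le> 1 * (4/27)^n"
      proof (rule mult_mono)
        show "x^2 \<le> 1" using x by (simp add: power_le_one)
        show "(x^2*(1-x))^n \<le> (4/27)^n" using x by (intro power_mono poly_bound) auto
      qed (use x in auto)
      finally show "x^(2*n+2) * (1-x)^n \<le> (4/27)^n" by simp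
    qed
    then show ?thesis using integral_unique[OF cP_integral] by simp
  qed
  then show ?thesis by simp
qed

definition P :: "real \<Rightarrow> real" where "P t = (\<Sum>n. cP n * t^n)"

lemma cP_summable: assumes "\<bar>t\<bar> < 27/4" shows "summable (\<lambda>n. cP n * t^n)"
proof (rule summable_comparison_test'[where g="\<lambda>n. (4/27*\<bar>t\<bar>)^n"])
  show "summable (\<lambda>n. (4/27*\<bar>t\<bar>)^n)" using assms by (intro summable_geometric) auto
  fix n :: nat
  have "norm (cP n * t^n) = cP n * \<bar>t\<bar>^n" using cP_nonneg by (simp add: abs_mult power_abs)
  also have "\<dots> \<le> (4/27)^n * \<bar>t\<bar>^n" by (intro mult_right_mono cP_bound) auto
  also have "\<dots> = (4/27*\<bar>t\<bar>)^n" by (rule power_mult_distrib[symmetric])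
  finally show "norm (cP n * t^n) \<le> (4/27*\<bar>t\<bar>)^n" .
qed

lemma term_eq: "t^k*(x^(2*k+2)*(1-x)^k) = x^2*(t*(x^2*(1-x)))^k" for t x :: real
proof -
  have "x^(2*k+2) = (x^2)^k * x^2" by (simp only: power_add power_mult)
  then show ?thesis by (simp only: power_mult_distrib mult_ac)
qed

lemma P_integral:
  assumes t: "\<bar>t\<bar> < 27/4"
  shows "((\<lambda>x. x^2 / (1 - t * (x^2*(1-x)))) has_integral P t) {0..1}"
proof -
  define \<rho> where "\<rho> = 4/27*\<bar>t\<bar>"
  have \<rho>: "0 \<le> \<rho>" "\<rho> < 1" using t by (auto simp: \<rho>_def)
  define f where "f N x = (\<Sum>k<N. t^k * (x^(2*k+2) * (1-x)^k))" for N x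
  have fk: "(f N has_integral (\<Sum>k<N. cP k * t^k)) {0..1}" for N
  proof -
    have "((\<lambda>x. \<Sum>k<N. t^k * (x^(2*k+2)*(1-x)^k)) has_integral (\<Sum>k<N. t^k * cP k)) {0..1}"
      by (intro has_integral_sum finite_lessThan has_integral_mult_right cP_integral)
    moreover have "(\<Sum>k<N. t^k * cP k) = (\<Sum>k<N. cP k * t^k)" by (simp add: mult.commute)
    ultimately show ?thesis unfolding f_def by simp
  qed
  have q: "\<bar>t * (x^2*(1-x))\<bar> \<le> \<rho>" if x: "x \<in> {0..1}" for x
  proof -
    have "0 \<le> x^2*(1-x)" using x by auto
    then have "\<bar>t * (x^2*(1-x))\<bar> = \<bar>t\<bar> * (x^2*(1-x))" by (metis abs_mult abs_of_nonneg)
    also have "\<dots> \<le> \<bar>t\<bar> * (4/27)" using x by (intro mult_left_mono poly_bound) auto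
    finally show ?thesis by (simp add: \<rho>_def)
  qed
  have fform: "f N x = x^2 * (\<Sum>k<N. (t * (x^2*(1-x)))^k)" for N x
    unfolding f_def sum_distrib_left
    by (intro sum.cong refl) (rule term_eq)
  have conv: "(\<lambda>N. f N x) \<longlonglongrightarrow> x^2 / (1 - t * (x^2*(1-x)))" if x: "x \<in> {0..1}" for x
  proof -
    have "\<bar>t * (x^2*(1-x))\<bar> < 1" using q[OF x] \<rho> by linarith
    then have "(\<lambda>k. (t * (x^2*(1-x)))^k) sums (1 / (1 - t * (x^2*(1-x))))"
      by (intro geometric_sums) simp
    then have "(\<lambda>N. x^2 * (\<Sum>k<N. (t * (x^2*(1-x)))^k)) \<longlonglongrightarrow> x^2 * (1 / (1 - t * (x^2*(1-x))))"
      unfolding sums_def by (intro tendsto_mult tendsto_const)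
    then show ?thesis unfolding fform by simp
  qed
  have bound: "norm (f N x) \<le> 1 / (1 - \<rho>)" if x: "x \<in> {0..1}" for N x
  proof -
    have "norm (f N x) \<le> x^2 * (\<Sum>k<N. \<bar>t * (x^2*(1-x))\<bar>^k)"
      unfolding fform using x by (auto simp: abs_mult intro!: mult_left_mono order.trans[OF sum_abs] simp: power_abs)
    also have "\<dots> \<le> 1 * (\<Sum>k<N. \<rho>^k)"
      using x q[OF x] by (intro mult_mono sum_mono power_mono sum_nonneg) (auto simp: power_le_one)
    also have "(\<Sum>k<N. \<rho>^k) \<le> (\<Sum>k. \<rho>^k)"
      using \<rho> by (intro sum_le_suminf summable_geometric) auto
    also have "(\<Sum>k. \<rho>^k) = 1 / (1 - \<rho>)" using \<rho> by (simp add: suminf_geometric)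
    finally show ?thesis by simp
  qed
  have dc: "(\<lambda>x. x^2 / (1 - t * (x^2*(1-x)))) integrable_on {0..1}"
     "(\<lambda>N. integral {0..1} (f N)) \<longlonglongrightarrow> integral {0..1} (\<lambda>x. x^2 / (1 - t * (x^2*(1-x))))"
    by (rule dominated_convergence[where h="\<lambda>x. 1/(1-\<rho>)", OF _ _ bound conv];
        use fk in \<open>auto intro: integrable_const_ivl\<close>)+
  have "(\<lambda>N. integral {0..1} (f N)) \<longlonglongrightarrow> P t"
    using summable_LIMSEQ[OF cP_summable[OF t]] fk[THEN integral_unique] unfolding P_def by simp
  then have "integral {0..1} (\<lambda>x. x^2 / (1 - t * (x^2*(1-x)))) = P t"
    using dc(2) LIMSEQ_unique by blast
  then show ?thesis using dc(1) by (simp add: has_integral_integral)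
qed

definition mm :: "real \<Rightarrow> real" where "mm u = 1 - u + u^2"
definition nn :: "real \<Rightarrow> real" where "nn u = 1 + u + u^2"
definition tt :: "real \<Rightarrow> real" where "tt u = 27*u^3/(1+u^3)^2"
definition RR :: "real \<Rightarrow> real \<Rightarrow> real" where
  "RR u x = mm u*(1+u)^2 - 3*u*(1+u)^2*x + 9*u^2*x^2"
definition qf :: "real \<Rightarrow> real \<Rightarrow> real" where "qf u x = (6*u*x - (1+u)^2)/(1-u^2)"
definition AA :: "real \<Rightarrow> real" where "AA u = arctan (sqrt 3 * u / (2 - u))"
definition BB :: "real \<Rightarrow> real" where "BB u = ln (mm u / (1+u)^2)"
definition WW :: "real \<Rightarrow> real" where "WW u = (1+u^3)^2/(27*u^2*nn u)"

lemma mm_pos: "mm u > 0"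
proof -
  have "mm u = (u - 1/2)^2 + 3/4" by (simp add: mm_def power2_eq_square algebra_simps)
  then show ?thesis by (simp add: add_nonneg_pos)
qed

lemma sqrt3_sq: "sqrt 3 * sqrt 3 = 3" "(sqrt 3)^2 = 3" by simp_all

lemma deriv_sqrt3_arctan:
  assumes "(q has_real_derivative q') (at x)"
  shows "((\<lambda>x. sqrt 3 * arctan (q x / sqrt 3)) has_real_derivative 3 * q' / (3 + (q x)^2)) (at x)"
proof -
  have "((\<lambda>x. sqrt 3 * arctan (q x / sqrt 3)) has_real_derivative
          sqrt 3 * (inverse (1 + (q x / sqrt 3)^2) * (q' / sqrt 3))) (at x)"
    by (intro DERIV_cmult DERIV_chain2[OF DERIV_arctan] DERIV_cdivide assms)
  also have "sqrt 3 * (inverse (1 + (q x / sqrt 3)^2) * (q' / sqrt 3)) = 3 * q' / (3 + (q x)^2)"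
  proof -
    have "1 + (q x / sqrt 3)^2 = (3 + (q x)^2) / 3" by (simp add: power_divide field_simps)
    moreover have "3 + (q x)^2 > 0" by (simp add: add_pos_nonneg)
    moreover have "sqrt 3 * (inverse ((3 + (q x)^2)/3) * (q' / sqrt 3)) = inverse ((3 + (q x)^2)/3) * q'"
      by simp
    ultimately show ?thesis by (simp add: field_simps)
  qed
  finally show ?thesis .
qed

lemma one_minus_sq_pos: "-1 < v \<Longrightarrow> v < 1 \<Longrightarrow> 1 - v^2 > (0::real)"
  using abs_square_less_1[of v] by auto

lemma dq1: assumes "-1 < v" "v < 1"
  shows "((\<lambda>w. qf w 1) has_real_derivative 4*mm v/(1-v^2)^2) (at v)"
proof -
  have nz: "1 - v^2 \<noteq> 0" using one_minus_sq_pos assms by fastforce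
  show ?thesis unfolding qf_def
    using nz by (auto intro!: derivative_eq_intros simp: field_simps mm_def power2_eq_square)
qed

lemma dq0: assumes "-1 < v" "v < 1"
  shows "((\<lambda>w. qf w 0) has_real_derivative -2*(1+v)^2/(1-v^2)^2) (at v)"
proof -
  have nz: "1 - v^2 \<noteq> 0" using one_minus_sq_pos assms by fastforce
  then have n2: "v^2 \<noteq> 1" by auto
  show ?thesis unfolding qf_def
    apply (rule derivative_eq_intros refl)+
    using n2 apply simp
    apply (simp add: divide_simps n2)
    apply algebra
    done
qed

lemma dqa: assumes "v < 2"
  shows "((\<lambda>w. 3 * w / (2 - w)) has_real_derivative 6/(2-v)^2) (at v)"
proof -
  have nz: "2 - v \<noteq> 0" "v \<noteq> 2" using assms by simp_all
  show ?thesis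
    apply (rule derivative_eq_intros refl)+
    using nz apply simp
    apply (simp add: divide_simps nz)
    apply algebra
    done
qed

lemma e1: assumes "-1 < v" "v < 1"
  shows "3 * (4*mm v/(1-v^2)^2) / (3 + (qf v 1)^2) = 3 / mm v"
proof -
  have n2: "v^2 \<noteq> 1" using one_minus_sq_pos assms by fastforce
  have m: "mm v \<noteq> 0" using mm_pos[of v] by simp
  have q: "3 + (qf v 1)^2 = 4 * (mm v)^2 / (1-v^2)^2"
    unfolding qf_def using n2 by (simp add: divide_simps mm_def) algebra
  have d: "(1-v^2)^2 \<noteq> 0" using n2 by simp
  have aux: "D \<noteq> 0 \<Longrightarrow> M \<noteq> 0 \<Longrightarrow> 3*(4*M/D)/(4*M^2/D) = 3/(M::real)" for D M
    by (simp add: field_simps power2_eq_square)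
  show ?thesis unfolding q using aux[OF d m] .
qed

lemma e0: assumes "-1 < v" "v < 1"
  shows "3 * (-2*(1+v)^2/(1-v^2)^2) / (3 + (qf v 0)^2) = -3 / (2 * mm v)"
proof -
  have n2: "v^2 \<noteq> 1" using one_minus_sq_pos assms by fastforce
  have m: "mm v \<noteq> 0" using mm_pos[of v] by simp
  have "3 + (qf v 0)^2 = 4 * mm v * (1+v)^2 / (1-v^2)^2"
    unfolding qf_def using n2 by (simp add: divide_simps mm_def) algebra
  moreover have "(1+v)^2 \<noteq> 0" using assms by simp
  ultimately show ?thesis using n2 m by (simp add: divide_simps) algebra
qed

lemma ea: assumes "v < 2"
  shows "3 * (6/(2-v)^2) / (3 + (3 * v / (2 - v))^2) = 3 / (2 * mm v)"
proof -
  have nz: "v \<noteq> 2" using assms by simp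
  have m: "mm v \<noteq> 0" using mm_pos[of v] by simp
  have "3 + (3 * v / (2 - v))^2 = 12 * mm v / (2-v)^2"
    using nz by (simp add: divide_simps mm_def) (simp add: power2_eq_square algebra_simps)
  then show ?thesis using nz m by (simp add: divide_simps)
qed

lemma arctan_identity:
  assumes "-1 < u" "u < 1"
  shows "arctan (qf u 1 / sqrt 3) - arctan (qf u 0 / sqrt 3) = 3 * AA u"
proof -
  define E where "E v = sqrt 3 * arctan (qf v 1 / sqrt 3) - sqrt 3 * arctan (qf v 0 / sqrt 3)
     - 3 * (sqrt 3 * arctan ((3 * v / (2 - v)) / sqrt 3))" for v
  have dE: "(E has_real_derivative 0) (at v within {-1<..<1})" if v: "v \<in> {-1<..<1}" for v
  proof -
    from v have v1: "-1 < v" "v < 1" by auto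
    have "(E has_real_derivative (3 / mm v - (-3 / (2 * mm v)) - 3 * (3 / (2 * mm v)))) (at v)"
      unfolding E_def
      apply (intro DERIV_diff DERIV_cmult)
      using deriv_sqrt3_arctan[OF dq1[OF v1]] deriv_sqrt3_arctan[OF dq0[OF v1]]
        deriv_sqrt3_arctan[OF dqa[of v]] v1 e1[OF v1] e0[OF v1] ea[of v] by auto
    moreover have "3 / mm v - (-3 / (2 * mm v)) - 3 * (3 / (2 * mm v)) = 0"
      using mm_pos[of v] by (simp add: field_simps)
    ultimately show ?thesis by (metis has_field_derivative_at_within)
  qed
  obtain c where c: "\<And>v. v \<in> {-1<..<1} \<Longrightarrow> E v = c"
    using has_field_derivative_zero_constant[OF convex_real_interval(8) dE] by blast
  have "E 0 = 0" unfolding E_def qf_def by simp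
  then have "E u = 0" using c[of 0] c[of u] assms by simp
  then have "sqrt 3 * (arctan (qf u 1 / sqrt 3) - arctan (qf u 0 / sqrt 3)
      - 3 * arctan ((3 * u / (2 - u)) / sqrt 3)) = 0"
    unfolding E_def by (simp add: algebra_simps)
  then have "arctan (qf u 1 / sqrt 3) - arctan (qf u 0 / sqrt 3)
      = 3 * arctan ((3 * u / (2 - u)) / sqrt 3)" by simp
  also have "(3 * u / (2 - u)) / sqrt 3 = sqrt 3 * u / (2 - u)"
  proof -
    have r: "3 / sqrt 3 = sqrt 3" by (rule real_div_sqrt) simp
    have "3 * u / (2 - u) / sqrt 3 = (3 / sqrt 3) * u / (2 - u)" by (simp add: field_simps)
    then show ?thesis by (simp only: r)
  qed
  finally show ?thesis unfolding AA_def .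
qed

definition FF :: "real \<Rightarrow> real \<Rightarrow> real" where
  "FF u x = WW u * (mm u/(3*u) * ln (mm u + 3*u*x) + (1+u)^2/(3*u) * ln (RR u x)
      + 2*(1+u)/(3*(1-u)) * (sqrt 3 * arctan (qf u x / sqrt 3)))"

lemma RR_eq: "4 * RR u x = 3*(1-u^2)^2 + (6*u*x - (1+u)^2)^2"
  unfolding RR_def mm_def by algebra

lemma RR_pos: assumes "-1 < u" "u < 1" shows "RR u x > 0"
proof -
  have "1 - u^2 > 0" using one_minus_sq_pos assms by blast
  then have "3*(1-u^2)^2 > 0" by simp
  then have "4 * RR u x > 0" unfolding RR_eq by (metis add_pos_nonneg zero_le_power2)
  then show ?thesis by simp
qed

lemma lin_pos: assumes "-1 < u" "u < 1" "0 \<le> x" "x \<le> 1" shows "mm u + 3*u*x > 0"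
proof (cases "u \<ge> 0")
  case True then show ?thesis using mm_pos[of u] assms by (simp add: add_pos_nonneg)
next
  case False
  then have "u*x \<ge> u" using assms by (simp add: mult_le_cancel_left1 mult_le_cancel_left_neg)
  moreover have "mm u + 3*u = (1+u)^2" unfolding mm_def by algebra
  moreover have "(1+u)^2 > 0" using assms by simp
  ultimately show ?thesis by linarith
qed

lemma I1: assumes "-1 < u" "u < 1" shows "3 + (qf u x)^2 = 4 * RR u x / (1-u^2)^2"
proof -
  have n: "(1-u^2) \<noteq> 0" using one_minus_sq_pos assms by fastforce
  have "3 + (qf u x)^2 = (3*(1-u^2)^2 + (6*u*x - (1+u)^2)^2) / (1-u^2)^2"
    unfolding qf_def using n by (simp add: field_simps power_divide)
  then show ?thesis unfolding RR_eq[symmetric] .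
qed

lemma poly2: "(1+u^3)^2 - 27*u^3*(x^2*(1-x)) = (mm u + 3*u*x) * RR u x"
  unfolding RR_def mm_def by algebra

lemma cube_pos: fixes u :: real assumes "-1 < u" shows "1 + u^3 > 0"
proof -
  have "1 + u^3 = (1+u) * mm u" unfolding mm_def by algebra
  moreover have "(1+u) * mm u > 0" using assms mm_pos[of u] by simp
  ultimately show ?thesis by simp
qed

lemma I2: assumes "-1 < u" shows "1 - tt u * (x^2*(1-x)) = (mm u + 3*u*x) * RR u x / (1+u^3)^2"
proof -
  have n: "(1+u^3) \<noteq> 0" using cube_pos[OF assms] by simp
  have "1 - tt u * (x^2*(1-x)) = ((1+u^3)^2 - 27*u^3*(x^2*(1-x))) / (1+u^3)^2"
    unfolding tt_def using n by (simp add: field_simps)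
  then show ?thesis unfolding poly2 .
qed

lemma alg_step:
  fixes u x a Rv m n R' :: real
  assumes a: "a \<noteq> 0" and Rv: "Rv \<noteq> 0" and u: "u \<noteq> 0" and u1: "1 - u \<noteq> 0" "1 + u \<noteq> 0"
    and nn: "n \<noteq> 0"
    and P4: "m*Rv + (1+u)^2*(6*u*x-(1+u)^2+3*u)*a = 27*u^2*n*x^2"
    and R': "R' = 18*u^2*x - 3*u*(1+u)^2"
  shows "(1+u^3)^2/(27*u^2*n) * (m/(3*u)*(3*u/a) + (1+u)^2/(3*u)*(R'/Rv)
          + 2*(1+u)/(3*(1-u))*(3*(6*u/(1-u^2))/(4*Rv/(1-u^2)^2)))
         = (1+u^3)^2*x^2/(a*Rv)"
proof -
  have s: "1 - u^2 = (1-u)*(1+u)" by algebra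
  have t1: "m/(3*u)*(3*u/a) = m/a" using u by simp
  have t2: "(1+u)^2/(3*u)*(R'/Rv) = (1+u)^2*(6*u*x-(1+u)^2)/Rv"
    unfolding R' using u Rv by (simp add: field_simps) algebra
  have g: "p \<noteq> 0 \<Longrightarrow> q \<noteq> 0 \<Longrightarrow> 2*q/(3*p)*(3*(6*u/(p*q))/(4*Rv/(p*q)^2)) = 3*u*q^2/Rv" for p q :: real
    using Rv by (simp add: field_simps power2_eq_square)
  have t3: "2*(1+u)/(3*(1-u))*(3*(6*u/(1-u^2))/(4*Rv/(1-u^2)^2)) = 3*u*(1+u)^2/Rv"
    unfolding s using g[OF u1] .
  have "m/a + (1+u)^2*(6*u*x-(1+u)^2)/Rv + 3*u*(1+u)^2/Rv
        = (m*Rv + (1+u)^2*(6*u*x-(1+u)^2+3*u)*a)/(a*Rv)"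
    using a Rv by (simp add: field_simps)
  also have "\<dots> = 27*u^2*n*x^2/(a*Rv)" unfolding P4 ..
  finally have "m/(3*u)*(3*u/a) + (1+u)^2/(3*u)*(R'/Rv)
          + 2*(1+u)/(3*(1-u))*(3*(6*u/(1-u^2))/(4*Rv/(1-u^2)^2)) = 27*u^2*n*x^2/(a*Rv)"
    unfolding t1 t2 t3 .
  then show ?thesis using u nn by (simp add: field_simps)
qed

lemma nn_pos: "nn u > 0"
proof -
  have "nn u = (u + 1/2)^2 + 3/4" by (simp add: nn_def power2_eq_square algebra_simps)
  then show ?thesis by (simp add: add_nonneg_pos)
qed

lemma P4: "mm u * RR u x + (1+u)^2*(6*u*x-(1+u)^2+3*u)*(mm u + 3*u*x) = 27*u^2*nn u*x^2"
  unfolding mm_def nn_def RR_def by algebra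

lemma FF_deriv:
  assumes u: "-1 < u" "u < 1" "u \<noteq> 0" and x: "0 \<le> x" "x \<le> 1"
  shows "(FF u has_real_derivative x^2/(1 - tt u*(x^2*(1-x)))) (at x)"
proof -
  define a where "a = mm u + 3*u*x"
  define Rv where "Rv = RR u x"
  define R' where "R' = 18*u^2*x - 3*u*(1+u)^2"
  have apos: "a > 0" unfolding a_def using lin_pos u x by blast
  have Rpos: "Rv > 0" unfolding Rv_def using RR_pos u by blast
  have d1: "((\<lambda>x. ln (mm u + 3*u*x)) has_real_derivative (3*u/a)) (at x)"
  proof -
    have i: "((\<lambda>x. mm u + 3*u*x) has_real_derivative 3*u) (at x)"
      by (auto intro!: derivative_eq_intros)
    show ?thesis using DERIV_chain2[OF DERIV_ln_divide i] apos unfolding a_def by simp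
  qed
  have d2: "((\<lambda>x. ln (RR u x)) has_real_derivative (R'/Rv)) (at x)"
  proof -
    have i: "((\<lambda>x. RR u x) has_real_derivative R') (at x)"
      unfolding RR_def R'_def by (auto intro!: derivative_eq_intros simp: algebra_simps power2_eq_square)
    show ?thesis using DERIV_chain2[OF DERIV_ln_divide i] Rpos unfolding Rv_def by simp
  qed
  have dq: "((\<lambda>x. qf u x) has_real_derivative 6*u/(1-u^2)) (at x)"
    unfolding qf_def using one_minus_sq_pos[OF u(1,2)] by (auto intro!: derivative_eq_intros)
  note d3 = deriv_sqrt3_arctan[OF dq]
  have D: "(FF u has_real_derivative
      WW u * (mm u/(3*u) * (3*u/a) + (1+u)^2/(3*u) * (R'/Rv)
        + 2*(1+u)/(3*(1-u)) * (3 * (6*u/(1-u^2)) / (3 + (qf u x)^2)))) (at x)"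
    unfolding FF_def[abs_def]
    by (intro DERIV_cmult DERIV_add d1 d2 d3)
  have "3 + (qf u x)^2 = 4*Rv/(1-u^2)^2" unfolding Rv_def using I1 u by blast
  moreover have "WW u * (mm u/(3*u) * (3*u/a) + (1+u)^2/(3*u) * (R'/Rv)
        + 2*(1+u)/(3*(1-u)) * (3 * (6*u/(1-u^2)) / (4*Rv/(1-u^2)^2))) = (1+u^3)^2*x^2/(a*Rv)"
    unfolding WW_def
    by (rule alg_step) (use apos Rpos u nn_pos[of u] in \<open>auto simp: R'_def a_def Rv_def P4\<close>)
  moreover have "(1+u^3)^2*x^2/(a*Rv) = x^2/(1 - tt u*(x^2*(1-x)))"
  proof -
    have "1 - tt u*(x^2*(1-x)) = a*Rv/(1+u^3)^2" unfolding a_def Rv_def using I2 u by blast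
    moreover have "(1+u^3)^2 \<noteq> 0" using cube_pos[of u] u by simp
    ultimately show ?thesis by simp
  qed
  ultimately show ?thesis using D by simp
qed

lemma lin_comb: "W*(a*L1 + b*L2 + c*(r*X1)) - W*(a*L3 + b*L4 + c*(r*X0))
   = W*(a*(L1-L3) + b*(L2-L4) + c*r*(X1-X0))" for W a b c r L1 L2 L3 L4 X1 X0 :: real
  by (simp add: algebra_simps)

lemma lin_comb2: fixes W m k q Lm Lq z r A p :: real assumes "p \<noteq> 0"
  shows "W*(m/k*(Lq-Lm) + q/k*(2*Lm - (Lm+Lq)) + 2*z/(3*p)*r*(3*A))
   = W*((q-m)/k*(Lm-Lq) + 2*r*z/p*A)"
  using assms by (cases "k = 0") (simp_all add: field_simps)

lemma P_closed:
  assumes u: "-1 < u" "u < 1" "u \<noteq> 0" and t: "\<bar>tt u\<bar> < 27/4"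
  shows "P (tt u) = WW u * (BB u + 2* sqrt 3*(1+u)/(1-u) * AA u)"
proof -
  have "((\<lambda>x. x^2/(1 - tt u*(x^2*(1-x)))) has_integral (FF u 1 - FF u 0)) {0..1}"
  proof (rule fundamental_theorem_of_calculus)
    fix x :: real assume "x \<in> {0..1}"
    then have "(FF u has_real_derivative x^2/(1 - tt u*(x^2*(1-x)))) (at x)"
      using FF_deriv[OF u] by auto
    then have "(FF u has_real_derivative x^2/(1 - tt u*(x^2*(1-x)))) (at x within {0..1})"
      by (rule has_field_derivative_at_within)
    then show "(FF u has_vector_derivative x^2/(1 - tt u*(x^2*(1-x)))) (at x within {0..1})"
      by (simp only: has_real_derivative_iff_has_vector_derivative)
  qed simp
  then have PF: "P (tt u) = FF u 1 - FF u 0"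
    using P_integral[OF t] has_integral_unique by blast
  have mp: "mm u > 0" by (rule mm_pos)
  have qp: "(1+u)^2 > 0" using u by simp
  define Lm where "Lm = ln (mm u)"
  define Lq where "Lq = ln ((1+u)^2)"
  have B: "BB u = Lm - Lq" unfolding BB_def Lm_def Lq_def using mp qp by (simp add: ln_div)
  have e1: "ln (mm u + 3*u*1) = Lq"
  proof -
    have "mm u + 3*u*1 = (1+u)^2" unfolding mm_def by algebra
    then show ?thesis unfolding Lq_def by simp
  qed
  have e2: "ln (mm u + 3*u*0) = Lm" unfolding Lm_def by simp
  have e3: "ln (RR u 1) = 2*Lm"
  proof -
    have "RR u 1 = (mm u)^2" unfolding RR_def mm_def by (simp add: power2_eq_square algebra_simps)
    then show ?thesis unfolding Lm_def using mp by (simp add: ln_realpow)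
  qed
  have e4: "ln (RR u 0) = Lm + Lq"
  proof -
    have "RR u 0 = mm u * (1+u)^2" unfolding RR_def by simp
    then show ?thesis unfolding Lm_def Lq_def using mp qp by (simp add: ln_mult)
  qed
  have at: "arctan (qf u 1 / sqrt 3) - arctan (qf u 0 / sqrt 3) = 3 * AA u"
    using arctan_identity u by blast
  have "FF u 1 - FF u 0 = WW u * (mm u/(3*u) * (Lq - Lm) + (1+u)^2/(3*u) * (2*Lm - (Lm + Lq))
      + 2*(1+u)/(3*(1-u)) * sqrt 3 * (arctan (qf u 1 / sqrt 3) - arctan (qf u 0 / sqrt 3)))"
    unfolding FF_def e1 e2 e3 e4 by (rule lin_comb)
  also have "\<dots> = WW u * (((1+u)^2 - mm u)/(3*u) * (Lm - Lq)
      + 2* sqrt 3*(1+u)/(1-u) * AA u)"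
  proof -
    have "1 - u \<noteq> 0" using u by auto
    then show ?thesis unfolding at by (rule lin_comb2)
  qed
  also have "(1+u)^2 - mm u = 3*u" unfolding mm_def by algebra
  finally show ?thesis unfolding PF B using u by simp

qed

definition cS :: "nat \<Rightarrow> real" where "cS n = cP n / real (Suc n)"
definition S :: "real \<Rightarrow> real" where "S t = (\<Sum>n. cS n * t^(Suc n))"
definition GG :: "real \<Rightarrow> real" where "GG u = 6 * (AA u)^2 - 1/2 * (BB u)^2"

lemma cS_nonneg: "0 \<le> cS n" unfolding cS_def using cP_nonneg by simp

lemma cS_le: "cS n \<le> cP n"
  unfolding cS_def using cP_nonneg[of n] by (simp add: divide_le_eq mult_le_cancel_left1) 

lemma S_summable: assumes "\<bar>t\<bar> < 27/4" shows "summable (\<lambda>n. cS n * t^(Suc n))"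
proof (rule summable_comparison_test'[where g="\<lambda>n. \<bar>t\<bar> * (cP n * \<bar>t\<bar>^n)"])
  have "summable (\<lambda>n. cP n * \<bar>t\<bar>^n)" using cP_summable[of "\<bar>t\<bar>"] assms by simp
  then show "summable (\<lambda>n. \<bar>t\<bar> * (cP n * \<bar>t\<bar>^n))" by (rule summable_mult)
  fix n
  have "norm (cS n * t^(Suc n)) = cS n * \<bar>t\<bar>^(Suc n)" using cS_nonneg[of n] by (simp add: abs_mult power_abs)
  also have "\<dots> \<le> cP n * \<bar>t\<bar>^(Suc n)" by (intro mult_right_mono cS_le) auto
  finally show "norm (cS n * t^(Suc n)) \<le> \<bar>t\<bar> * (cP n * \<bar>t\<bar>^n)" by (simp add: mult_ac)
qed

lemma S_sums: "\<bar>t\<bar> < 27/4 \<Longrightarrow> (\<lambda>n. cS n * t^(Suc n)) sums S t"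
  unfolding S_def using S_summable by (simp add: summable_sums)

lemma S_deriv: assumes "\<bar>t\<bar> < 27/4" shows "(S has_real_derivative P t) (at t)"
proof -
  have e: "cS n * real (Suc n) = cP n" for n unfolding cS_def by simp
  have e2: "cS n * (1 + real n) = cP n" for n unfolding cS_def by simp
  have "DERIV (\<lambda>x. \<Sum>n. cS n * x^(Suc n)) t :> (\<Sum>n. cS n * real (Suc n) * t^n)"
    by (rule DERIV_power_series'[where R="27/4"]) (use assms cP_summable in \<open>auto simp: e e2\<close>)
  then show ?thesis unfolding S_def[abs_def] P_def e .
qed

lemma S_zero: "S 0 = 0" unfolding S_def by simp

lemma GG_zero: "GG 0 = 0" unfolding GG_def AA_def BB_def mm_def by simp

lemma AA_deriv: assumes "v < 2" shows "(AA has_real_derivative sqrt 3 / (2 * mm v)) (at v)"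
proof -
  have nz: "2 - v \<noteq> 0" "v \<noteq> 2" using assms by auto
  have i: "((\<lambda>v. sqrt 3 * v / (2 - v)) has_real_derivative 2 * sqrt 3 / (2-v)^2) (at v)"
    apply (rule derivative_eq_intros refl)+
    using nz apply simp
    apply (simp add: divide_simps nz)
    apply (simp add: power2_eq_square algebra_simps)
    done
  have "(AA has_real_derivative inverse (1 + (sqrt 3 * v / (2 - v))^2) * (2 * sqrt 3 / (2-v)^2)) (at v)"
    unfolding AA_def[abs_def] by (rule DERIV_chain2[OF DERIV_arctan i])
  moreover have "inverse (1 + (sqrt 3 * v / (2 - v))^2) * (2 * sqrt 3 / (2-v)^2) = sqrt 3 / (2 * mm v)"
  proof -
    have "1 + (sqrt 3 * v / (2 - v))^2 = 4 * mm v / (2-v)^2"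
      using nz by (simp add: power_divide power_mult_distrib divide_simps mm_def) (simp add: power2_eq_square algebra_simps)
    moreover have "mm v \<noteq> 0" using mm_pos[of v] by simp
    ultimately show ?thesis using nz by (simp add: field_simps)
  qed
  ultimately show ?thesis by simp
qed

lemma BB_deriv: assumes "-1 < v" shows "(BB has_real_derivative 3*(v-1)/(1+v^3)) (at v)"
proof -
  have p: "(1+v) \<noteq> 0" "1 + v > 0" using assms by auto
  have mp: "mm v > 0" by (rule mm_pos)
  have c: "1 + v^3 = (1+v) * mm v" unfolding mm_def by algebra
  have i: "((\<lambda>v. mm v / (1+v)^2) has_real_derivative ((2 * v - 1)*(1+v) - 2 * mm v)/(1+v)^3) (at v)"
    unfolding mm_def
    apply (rule derivative_eq_intros refl)+
    using p apply simp
    apply (simp add: divide_simps p)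
    apply algebra
    done
  have "(BB has_real_derivative inverse (mm v / (1+v)^2) * (((2 * v - 1)*(1+v) - 2 * mm v)/(1+v)^3)) (at v)"
    unfolding BB_def[abs_def] by (rule DERIV_chain2[OF DERIV_ln i]) (use mp p in simp)
  moreover have "inverse (mm v / (1+v)^2) * (((2 * v - 1)*(1+v) - 2 * mm v)/(1+v)^3) = 3*(v-1)/(1+v^3)"
  proof -
    have E: "(2 * v - 1)*(1+v) - 2 * mm v = 3*(v-1)" unfolding mm_def by algebra
    have g: "m \<noteq> 0 \<Longrightarrow> q \<noteq> 0 \<Longrightarrow> inverse (m/q^2)*(X/q^3) = X/(q*m)" for m q X :: real
      by (simp add: field_simps power2_eq_square power3_eq_cube)
    show ?thesis unfolding c E using g[of "mm v" "1+v" "3*(v-1)"] p mp by simp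
  qed
  ultimately show ?thesis by simp
qed

lemma GG_deriv: assumes "-1 < v" "v < 1"
  shows "(GG has_real_derivative 12 * AA v * (sqrt 3 / (2 * mm v)) - BB v * (3*(v-1)/(1+v^3))) (at v)"
proof -
  have "(GG has_real_derivative 6 * (of_nat 2 * (sqrt 3 / (2 * mm v) * AA v ^ (2 - Suc 0)))
        - 1/2 * (of_nat 2 * (3*(v-1)/(1+v^3) * BB v ^ (2 - Suc 0)))) (at v)"
    unfolding GG_def[abs_def]
    by (intro DERIV_diff DERIV_cmult DERIV_power AA_deriv BB_deriv) (use assms in auto)
  then show ?thesis by (simp add: algebra_simps)
qed

definition ttd :: "real \<Rightarrow> real" where "ttd u = 81*u^2*(1-u^3)/(1+u^3)^3"

lemma tt_deriv: assumes "-1 < v" shows "(tt has_real_derivative ttd v) (at v)"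
proof -
  have c: "1 + v^3 \<noteq> 0" using cube_pos[OF assms] by simp
  show ?thesis unfolding tt_def[abs_def] ttd_def
    apply (rule derivative_eq_intros refl)+
    using c apply simp
    apply (simp add: divide_simps c)
    apply algebra
    done
qed

lemma key_alg:
  fixes W T' B A r a b m n c d u :: real
  assumes "a \<noteq> 0" "b \<noteq> 0" "m \<noteq> 0" "n \<noteq> 0" "u \<noteq> 0"
    and W: "W = c^2/(27*u^2*n)" and T: "T' = 81*u^2*d/c^3" and c: "c = b*m" and d: "d = a*n"
  shows "W*(B + 2*r*b/a*A)*T' = 12*A*(r/(2*m)) - B*(3*(-a)/c)"
  unfolding W T d c using assms by (simp add: field_simps power2_eq_square power3_eq_cube)

lemma key:
  assumes u: "-1 < u" "u < 1" "u \<noteq> 0" and t: "\<bar>tt u\<bar> < 27/4"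
  shows "P (tt u) * ttd u = 12 * AA u * (sqrt 3 / (2 * mm u)) - BB u * (3*(u-1)/(1+u^3))"
proof -
  have "P (tt u) * ttd u = WW u * (BB u + 2 * sqrt 3 * (1+u)/(1-u) * AA u) * ttd u"
    using P_closed[OF u t] by simp
  also have "\<dots> = 12 * AA u * (sqrt 3 / (2 * mm u)) - BB u * (3*(-(1-u))/(1+u^3))"
    by (rule key_alg[where n="nn u" and d="1-u^3" and m="mm u" and b="1+u" and a="1-u"])
       (use u mm_pos[of u] nn_pos[of u] in \<open>auto simp: WW_def ttd_def mm_def nn_def\<close>, algebra+)
  finally show ?thesis by simp
qed

lemma tt_pos_bound: assumes "0 \<le> v" "v < 1" shows "\<bar>tt v\<bar> < 27/4"
proof -
  have w0: "0 \<le> v^3" "v^3 < 1" using assms by (auto simp: power_less_one_iff)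
  have c: "(1+v^3)^2 > 0" using cube_pos[of v] assms by simp
  have "4*(27* v^3) < 27*(1+v^3)^2"
  proof -
    have "27*(1+v^3)^2 - 4*(27* v^3) = 27*(1-v^3)^2" by algebra
    moreover have "(1-v^3)^2 > 0" using w0 by simp
    ultimately show ?thesis by linarith
  qed
  then have "27* v^3/(1+v^3)^2 < 27/4" using c by (simp add: divide_simps)
  moreover have "tt v \<ge> 0" unfolding tt_def using w0 by simp
  ultimately show ?thesis unfolding tt_def by simp
qed

lemma tt_neg_bound: assumes "-1 < u" "u \<le> v" "v \<le> 0" shows "\<bar>tt v\<bar> \<le> \<bar>tt u\<bar>"
proof -
  have a: "u^3 \<le> v^3" using assms by (simp add: power_mono_odd)
  have b: "v^3 \<le> 0"
  proof -
    have "v^3 = (v * v)* v" by (simp add: power3_eq_cube)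
    then show ?thesis using mult_nonneg_nonpos[of "v * v" v] assms by simp
  qed
  have cu: "1 + u^3 > 0" using cube_pos assms(1) by blast
  have "\<bar>tt v\<bar> = 27*(- (v^3))/(1+v^3)^2" unfolding tt_def using b by (simp add: abs_div abs_mult)
  also have "\<dots> \<le> 27*(- (u^3))/(1+u^3)^2"
    by (rule frac_le) (use a b cu assms in \<open>auto intro: power_mono\<close>)
  also have "\<dots> = \<bar>tt u\<bar>"
  proof -
    have "u^3 \<le> 0" using a b by linarith
    then have "\<bar>u^3\<bar> = - (u^3)" by simp
    then show ?thesis unfolding tt_def by (simp add: abs_div abs_mult)
  qed
  finally show ?thesis .
qed

lemma D_deriv:
  assumes v: "-1 < v" "v < 1" and t: "\<bar>tt v\<bar> < 27/4"
  shows "((\<lambda>v. S (tt v) - GG v) has_real_derivative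
           P (tt v) * ttd v - (12 * AA v * (sqrt 3 / (2 * mm v)) - BB v * (3*(v-1)/(1+v^3)))) (at v)"
  by (intro DERIV_diff DERIV_chain2[OF S_deriv[OF t] tt_deriv] GG_deriv) (use v in auto)

lemma main_identity:
  assumes u: "-1 < u" "u < 1" and t: "\<bar>tt u\<bar> < 27/4"
  shows "S (tt u) = GG u"
proof -
  define D where "D v = S (tt v) - GG v" for v
  have D0: "D 0 = 0" unfolding D_def tt_def using S_zero GG_zero by simp
  have cont: "continuous_on {a..b} D" if "\<And>v. v \<in> {a..b} \<Longrightarrow> -1 < v \<and> v < 1 \<and> \<bar>tt v\<bar> < 27/4" for a b
    unfolding D_def
    by (intro continuous_at_imp_continuous_on ballI DERIV_isCont[OF D_deriv]) (use that in auto)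
  have der: "(D has_real_derivative 0) (at v)" if "-1 < v" "v < 1" "v \<noteq> 0" "\<bar>tt v\<bar> < 27/4" for v
    using D_deriv[OF that(1,2,4)] key[OF that] unfolding D_def[abs_def] by simp
  consider "u = 0" | "0 < u" | "u < 0" by linarith
  then have "D u = 0"
  proof cases
    case 1 then show ?thesis using D0 by simp
  next
    case 2
    have "D u = D 0"
    proof (rule DERIV_isconst_end[OF 2])
      show "continuous_on {0..u} D" by (rule cont) (use u tt_pos_bound in auto)
      fix v assume "0 < v" "v < u"
      then show "(D has_real_derivative 0) (at v)" using u tt_pos_bound by (intro der) auto
    qed
    then show ?thesis using D0 by simp
  next
    case 3
    have b: "\<bar>tt v\<bar> < 27/4" if "u \<le> v" "v \<le> 0" for v
      using tt_neg_bound[OF u(1) that] t by linarith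
    have "D 0 = D u"
    proof (rule DERIV_isconst_end[OF 3])
      show "continuous_on {u..0} D" by (rule cont) (use u b in auto)
      fix v assume "u < v" "v < 0"
      then show "(D has_real_derivative 0) (at v)" using u b by (intro der) auto
    qed
    then show ?thesis using D0 by simp
  qed
  then show ?thesis unfolding D_def by simp
qed

lemma tt_nonneg: "0 \<le> u \<Longrightarrow> 0 \<le> tt u" unfolding tt_def by simp

lemma tt_le: "0 \<le> u \<Longrightarrow> u < 1 \<Longrightarrow> tt u \<le> 27/4"
  using tt_pos_bound[of u] by simp

lemma GG_cont: "isCont GG 1"
proof -
  have "isCont (\<lambda>u. 6 * (arctan (sqrt 3 * u / (2 - u)))^2
      - 1/2 * (ln ((1 - u + u^2) / (1+u)^2))^2) 1"
    by (intro continuous_intros) auto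
  then show ?thesis unfolding GG_def[abs_def] AA_def[abs_def] BB_def[abs_def] mm_def[abs_def] .
qed

lemma tt_cont: "isCont tt 1"
proof -
  have "isCont (\<lambda>u::real. 27*u^3/(1+u^3)^2) 1" by (intro continuous_intros) auto
  then show ?thesis unfolding tt_def[abs_def] .
qed

lemma tt_one: "tt 1 = 27/4" unfolding tt_def by simp

lemma boundary: "(\<lambda>n. cS n * (27/4)^(Suc n)) sums GG 1"
proof -
  have ev: "eventually (\<lambda>u. u \<in> {0<..<1}) (at_left (1::real))"
    by (rule eventually_at_left_real) simp
  have GGlim: "(GG \<longlongrightarrow> GG 1) (at_left 1)"
    using GG_cont by (simp add: isCont_def filterlim_at_split)
  have ttlim: "(tt \<longlongrightarrow> 27/4) (at_left 1)"
    using tt_cont tt_one by (metis isCont_def filterlim_at_split)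
  have eqS: "S (tt u) = GG u" if "u \<in> {0<..<1}" for u
    using that by (intro main_identity tt_pos_bound) auto
  have nn: "0 \<le> cS n * (27/4)^(Suc n)" for n using cS_nonneg by simp
  have part: "(\<Sum>n<N. cS n * (27/4)^(Suc n)) \<le> GG 1" for N
  proof -
    have lim: "((\<lambda>u. \<Sum>n<N. cS n * (tt u)^(Suc n)) \<longlongrightarrow> (\<Sum>n<N. cS n * (27/4)^(Suc n))) (at_left 1)"
      by (intro tendsto_intros ttlim)
    have "eventually (\<lambda>u. (\<Sum>n<N. cS n * (tt u)^(Suc n)) \<le> GG u) (at_left 1)"
      using ev
    proof eventually_elim
      case (elim u)
      then have t: "\<bar>tt u\<bar> < 27/4" "0 \<le> tt u" using tt_pos_bound tt_nonneg by auto
      have "(\<Sum>n<N. cS n * (tt u)^(Suc n)) \<le> (\<Sum>n. cS n * (tt u)^(Suc n))"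
        by (rule sum_le_suminf[OF S_summable[OF t(1)]]) (use t cS_nonneg in auto)
      also have "\<dots> = GG u" using eqS[OF elim] unfolding S_def .
      finally show ?case .
    qed
    then show ?thesis by (rule tendsto_le[OF _ GGlim lim, rotated]) simp
  qed
  have summ: "summable (\<lambda>n. cS n * (27/4)^(Suc n))"
    by (rule summableI_nonneg_bounded[OF nn part])
  have le1: "(\<Sum>n. cS n * (27/4)^(Suc n)) \<le> GG 1"
    by (rule suminf_le_const[OF summ part])
  have le2: "GG 1 \<le> (\<Sum>n. cS n * (27/4)^(Suc n))"
  proof -
    have "eventually (\<lambda>u. GG u \<le> (\<Sum>n. cS n * (27/4)^(Suc n))) (at_left 1)"
      using ev
    proof eventually_elim
      case (elim u)
      then have t: "\<bar>tt u\<bar> < 27/4" "0 \<le> tt u" "tt u \<le> 27/4" using tt_pos_bound tt_nonneg tt_le by auto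
      have "GG u = (\<Sum>n. cS n * (tt u)^(Suc n))" using eqS[OF elim] unfolding S_def by simp
      also have "\<dots> \<le> (\<Sum>n. cS n * (27/4)^(Suc n))"
        by (rule suminf_le[OF _ S_summable[OF t(1)] summ])
           (intro mult_left_mono power_mono; use t cS_nonneg in auto)
      finally show ?case .
    qed
    then show ?thesis by (rule tendsto_le[OF _ tendsto_const GGlim, rotated]) simp
  qed
  have eq: "(\<Sum>n. cS n * (27/4)^(Suc n)) = GG 1" using le1 le2 by (rule antisym)
  show ?thesis using summable_sums[OF summ] unfolding eq .
qed

lemma case_pos:
  fixes c :: real assumes c: "c \<ge> 1"
  shows "tt (1/c) = 27*c^3/(c^3+1)^2"
    and "GG (1/c) = 6 * (arctan (sqrt 3 / (2*c - 1)))^2 - 1/2 * (ln ((c^3+1)/(c+1)^3))^2"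
proof -
  have c0: "c \<noteq> 0" "c > 0" using c by auto
  have c1: "c^3 + 1 \<noteq> 0" using one_le_power[OF c, of 3] by linarith
  show "tt (1/c) = 27*c^3/(c^3+1)^2"
    unfolding tt_def using c0 c1 by (simp add: power_divide field_simps)
  have a: "sqrt 3 * (1/c) / (2 - 1/c) = sqrt 3 / (2*c - 1)"
    using c0 c by (simp add: field_simps)
  have b: "mm (1/c) / (1 + 1/c)^2 = (c^3+1)/(c+1)^3"
  proof -
    have "c + 1 \<noteq> 0" using c by simp
    then show ?thesis unfolding mm_def using c0 by (simp add: field_simps) algebra
  qed
  show "GG (1/c) = 6 * (arctan (sqrt 3 / (2*c - 1)))^2 - 1/2 * (ln ((c^3+1)/(c+1)^3))^2"
    unfolding GG_def AA_def BB_def a b ..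
qed

lemma case_neg:
  fixes c :: real assumes c: "c > 1"
  shows "tt (-1/c) = -27*c^3/(c^3-1)^2"
    and "GG (-1/c) = 6 * (arctan (sqrt 3 / (2*c + 1)))^2 - 1/2 * (ln ((c^3-1)/(c-1)^3))^2"
proof -
  have c0: "c \<noteq> 0" "c > 0" using c by auto
  have c1: "c^3 - 1 \<noteq> 0" using one_less_power[OF c, of 3] by linarith
  have "tt (-1/c) = 27*(-1/c^3)/(1 + (-1/c^3))^2"
    unfolding tt_def by (simp add: power_divide)
  also have "\<dots> = -27*c^3/(c^3-1)^2"
    using c0 c1 by (simp add: field_simps)
  finally show "tt (-1/c) = -27*c^3/(c^3-1)^2" .
  have a: "sqrt 3 * (-1/c) / (2 - (-1/c)) = - (sqrt 3 / (2*c + 1))"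
    using c0 c by (simp add: field_simps)
  have b: "mm (-1/c) / (1 + (-1/c))^2 = (c^3-1)/(c-1)^3"
  proof -
    have "c - 1 \<noteq> 0" using c by simp
    then show ?thesis unfolding mm_def using c0 by (simp add: field_simps) algebra
  qed
  show "GG (-1/c) = 6 * (arctan (sqrt 3 / (2*c + 1)))^2 - 1/2 * (ln ((c^3-1)/(c-1)^3))^2"
    unfolding GG_def AA_def BB_def a b arctan_minus by simp
qed

lemma term_form:
  fixes F c :: real and m k :: nat assumes F: "F \<noteq> 0"
  shows "(let n = Suc k in (-1)^(n*m) * c^n / (real n^2 * real (3*n choose n) * F^(2*n)))
         = cS k * ((-1)^m * c / F^2)^(Suc k)"
proof -
  have C: "real (3 * Suc k choose Suc k) \<noteq> 0" by simp
  have e1: "(-1::real)^(Suc k * m) = ((-1)^m)^(Suc k)" by (metis power_mult mult.commute)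
  have e2: "F^(2 * Suc k) = (F^2)^(Suc k)" by (rule power_mult)
  have g: "N \<noteq> 0 \<Longrightarrow> C \<noteq> 0 \<Longrightarrow> G \<noteq> 0 \<Longrightarrow> a*b/(N^2*C*G) = 1/(N*C)/N*(a*b/G)" for a b N C G :: real
    by (simp add: field_simps power2_eq_square)
  show ?thesis unfolding Let_def cS_def cP_def e1 e2 power_divide power_mult_distrib
    by (rule g) (use F C in auto)
qed

lemma gr_gt1: "golden_ratio > 1"
proof -
  have "sqrt 5 > 1" by simp
  then show ?thesis unfolding golden_ratio_def by simp
qed

definition psi :: real where "psi = (1 - sqrt 5)/2"

lemma gr_psi: "golden_ratio * psi = -1"
  unfolding golden_ratio_def psi_def by (simp add: field_simps power2_eq_square[symmetric])

lemma fib_cf: "real (fib n) = (golden_ratio^n - psi^n) / sqrt 5"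
  using fib_closed_form[of n] unfolding golden_ratio_def psi_def by simp

lemma lucas_cf: "real (lucas n) = golden_ratio^n + psi^n"
proof (induction n rule: lucas.induct)
  case 1 then show ?case by simp
next
  case 2 then show ?case unfolding golden_ratio_def psi_def by (simp add: field_simps)
next
  case (3 n)
  have a: "golden_ratio^2 = golden_ratio + 1" unfolding golden_ratio_def
    by (simp add: power2_eq_square field_simps)
  have b: "psi^2 = psi + 1" unfolding psi_def by (simp add: power2_eq_square field_simps)
  have "real (lucas (Suc (Suc n))) = real (lucas (Suc n)) + real (lucas n)" by simp
  also have "\<dots> = golden_ratio^n * (golden_ratio + 1) + psi^n * (psi + 1)"
    using 3 by (simp add: algebra_simps)
  also have "\<dots> = golden_ratio^Suc (Suc n) + psi^Suc (Suc n)"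
    unfolding a[symmetric] b[symmetric] by (simp add: power2_eq_square)
  finally show ?case .
qed

lemma lucas_ge: "lucas n \<ge> 1 \<and> (n \<ge> 2 \<longrightarrow> lucas n \<ge> 3)"
proof (induction n rule: lucas.induct)
  case (3 n)
  then show ?case by (cases n) auto
qed auto

lemma sqrt5_beta_F: "sqrt 5 * golden_ratio^r * real (fib r) = (golden_ratio^r)^2 - (-1)^r"
proof -
  have "sqrt 5 * golden_ratio^r * real (fib r) = golden_ratio^r * (golden_ratio^r - psi^r)"
    unfolding fib_cf by simp
  also have "\<dots> = (golden_ratio^r)^2 - (golden_ratio * psi)^r"
    by (simp add: power2_eq_square algebra_simps power_mult_distrib)
  finally show ?thesis unfolding gr_psi .
qed

lemma beta_L: "golden_ratio^r * real (lucas r) = (golden_ratio^r)^2 + (-1)^r"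
proof -
  have "golden_ratio^r * real (lucas r) = (golden_ratio^r)^2 + (golden_ratio * psi)^r"
    unfolding lucas_cf by (simp add: power2_eq_square algebra_simps power_mult_distrib)
  then show ?thesis unfolding gr_psi .
qed

lemma root_facts:
  fixes r :: nat
  defines "c \<equiv> root 3 (golden_ratio^(2*r))"
  shows "c > 0" "c^3 = (golden_ratio^r)^2" "r \<noteq> 0 \<Longrightarrow> c > 1" "r = 0 \<Longrightarrow> c = 1"
proof -
  have gp: "golden_ratio > 0" using gr_gt1 by simp
  have e: "golden_ratio^(2*r) = (golden_ratio^r)^2" by (simp add: power_mult[symmetric] mult.commute)
  show "c > 0" unfolding c_def using gp by (simp add: real_root_gt_zero)
  show c3: "c^3 = (golden_ratio^r)^2" unfolding c_def e by simp
  show "r = 0 \<Longrightarrow> c = 1" unfolding c_def by simp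
  assume "r \<noteq> 0"
  then have "golden_ratio^r > 1" using gr_gt1 by (simp add: one_less_power)
  then have "(golden_ratio^r)^2 > 1" by (simp add: one_less_power)
  then have "c^3 > 1" using c3 by simp
  show "c > 1"
  proof (rule ccontr)
    assume "\<not> c > 1"
    then have "c^3 \<le> 1" using \<open>c > 0\<close> by (intro power_le_one) auto
    then show False using \<open>c^3 > 1\<close> by simp
  qed
qed

lemma sums_at: assumes "-1 < u" "u < 1" "\<bar>tt u\<bar> < 27/4"
  shows "(\<lambda>n. cS n * tt u^(Suc n)) sums GG u"
  using S_sums[OF assms(3)] main_identity[OF assms] by simp

lemma alg_f: fixes Y b F :: real assumes "Y = sqrt 5 * b * F" "b \<noteq> 0" "F \<noteq> 0"
  shows "27 * b^2 / Y^2 = (27/5) / F^2"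
proof -
  have "Y^2 = 5 * b^2 * F^2" unfolding assms(1) by (simp add: power_mult_distrib)
  then show ?thesis using assms(2,3) by (simp add: field_simps)
qed

lemma alg_l: fixes Y b L :: real assumes "Y = b * L" "b \<noteq> 0" "L \<noteq> 0"
  shows "27 * b^2 / Y^2 = 27 / L^2"
  unfolding assms(1) using assms(2,3) by (simp add: field_simps power_mult_distrib)

lemma fib_part:
  fixes r :: nat assumes r: "r \<noteq> 0"
  shows "(\<lambda>k. let n = Suc k in
         (-1) ^ (n * (r - 1)) * (27/5) ^ n /
         (real n ^ 2 * real (3 * n choose n) * real (fib r) ^ (2 * n)))
      sums (6 * (arctan (sqrt 3 / (2 * root 3 (golden_ratio ^ (2 * r)) + (-1) ^ r))) ^ 2
            - 1/2 * (ln (sqrt 5 * golden_ratio ^ r * real (fib r) /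
                        (root 3 (golden_ratio ^ (2 * r)) - (-1) ^ r) ^ 3)) ^ 2)"
proof -
  define c where "c = root 3 (golden_ratio ^ (2 * r))"
  define b where "b = golden_ratio ^ r"
  define F where "F = real (fib r)"
  have c0: "c > 0" "c^3 = b^2" "c > 1" using root_facts[of r] r unfolding c_def b_def by auto
  have b0: "b \<noteq> 0" unfolding b_def using gr_gt1 by simp
  have F1: "F \<ge> 1" unfolding F_def using fib_neq_0_nat[of r] r by simp
  then have F0: "F \<noteq> 0" by simp
  have X: "sqrt 5 * b * F = c^3 - (-1)^r" unfolding b_def F_def c0(2)[unfolded b_def] by (rule sqrt5_beta_F)
  define t where "t = (-1)^(r-1) * (27/5) / F^2"
  have T: "(\<lambda>k. let n = Suc k in (-1) ^ (n * (r - 1)) * (27/5) ^ n /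
         (real n ^ 2 * real (3 * n choose n) * F ^ (2 * n))) = (\<lambda>k. cS k * t^(Suc k))"
    unfolding t_def by (intro ext term_form F0)
  have tb: "\<bar>t\<bar> < 27/4"
  proof -
    have "\<bar>t\<bar> = (27/5) / F^2" unfolding t_def by (simp add: abs_mult power_abs)
    also have "\<dots> \<le> 27/5" using F1 by (simp add: divide_le_eq one_le_power)
    finally show ?thesis by simp
  qed
  show ?thesis
  proof (cases "even r")
    case True
    then have e: "(-1::real)^r = 1" "(-1::real)^(r-1) = -1" using r by (auto simp: odd_pos)
    have u: "-1 < -1/c" "-1/c < 1" using c0 by (auto simp: field_simps)
    have tu: "tt (-1/c) = t"
    proof -
      have "tt (-1/c) = - (27 * b^2 / (c^3 - 1)^2)" using case_neg(1)[OF c0(3)] c0(2) by simp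
      also have "\<dots> = - ((27/5) / F^2)" using alg_f[OF X[unfolded e, symmetric] b0 F0] by simp
      finally show ?thesis unfolding t_def e by simp
    qed
    have "(\<lambda>k. cS k * t^(Suc k)) sums GG (-1/c)"
      using sums_at[OF u] tu tb by simp
    also have "GG (-1/c) = 6 * (arctan (sqrt 3 / (2 * c + (-1) ^ r))) ^ 2
            - 1/2 * (ln (sqrt 5 * b * F / (c - (-1) ^ r) ^ 3)) ^ 2"
      unfolding case_neg(2)[OF c0(3)] X e by simp
    finally show ?thesis using T unfolding c_def b_def F_def by simp
  next
    case False
    then have e: "(-1::real)^r = -1" "(-1::real)^(r-1) = 1" using r by (auto simp: odd_pos)
    have u: "0 \<le> 1/c" "1/c < 1" using c0 by (auto simp: field_simps)
    have tu: "tt (1/c) = t"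
    proof -
      have "tt (1/c) = 27 * b^2 / (c^3 + 1)^2" using case_pos(1)[of c] c0 by simp
      also have "\<dots> = (27/5) / F^2" using alg_f[OF X[unfolded e, symmetric] b0 F0] by simp
      finally show ?thesis unfolding t_def e by simp
    qed
    have "(\<lambda>k. cS k * t^(Suc k)) sums GG (1/c)"
      using sums_at[of "1/c"] u tu tb by simp
    also have "GG (1/c) = 6 * (arctan (sqrt 3 / (2 * c + (-1) ^ r))) ^ 2
            - 1/2 * (ln (sqrt 5 * b * F / (c - (-1) ^ r) ^ 3)) ^ 2"
    proof -
      have X': "sqrt 5 * b * F = c^3 + 1" using X e by simp
      have G: "GG (1/c) = 6*(arctan(sqrt 3/(2*c - 1)))^2 - 1/2*(ln((c^3+1)/(c+1)^3))^2"
        using case_pos(2)[of c] c0(3) by simp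
      show ?thesis unfolding X' e G by simp
    qed
    finally show ?thesis using T unfolding c_def b_def F_def by simp
  qed
qed

lemma lucas_part:
  fixes r :: nat assumes r: "r \<noteq> 1"
  shows "(\<lambda>k. let n = Suc k in
         (-1) ^ (n * r) * 27 ^ n /
         (real n ^ 2 * real (3 * n choose n) * real (lucas r) ^ (2 * n)))
      sums (6 * (arctan (sqrt 3 / (2 * root 3 (golden_ratio ^ (2 * r)) - (-1) ^ r))) ^ 2
            - 1/2 * (ln (golden_ratio ^ r * real (lucas r) /
                        (root 3 (golden_ratio ^ (2 * r)) + (-1) ^ r) ^ 3)) ^ 2)"
proof -
  define c where "c = root 3 (golden_ratio ^ (2 * r))"
  define b where "b = golden_ratio ^ r"
  define L where "L = real (lucas r)"
  have c0: "c > 0" "c^3 = b^2" "r \<noteq> 0 \<Longrightarrow> c > 1" "r = 0 \<Longrightarrow> c = 1"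
    using root_facts[of r] unfolding c_def b_def by auto
  have c1: "c \<ge> 1" using c0 by (cases "r = 0") auto
  have b0: "b \<noteq> 0" unfolding b_def using gr_gt1 by simp
  have L1: "L \<ge> 1" "r \<ge> 2 \<Longrightarrow> L \<ge> 3" unfolding L_def using lucas_ge[of r] by auto
  then have L0: "L \<noteq> 0" by simp
  have X: "b * L = c^3 + (-1)^r" unfolding b_def L_def c0(2)[unfolded b_def] by (rule beta_L)
  define t where "t = (-1)^r * 27 / L^2"
  have T: "(\<lambda>k. let n = Suc k in (-1) ^ (n * r) * 27 ^ n /
         (real n ^ 2 * real (3 * n choose n) * L ^ (2 * n))) = (\<lambda>k. cS k * t^(Suc k))"
    unfolding t_def by (intro ext term_form L0)
  show ?thesis
  proof (cases "even r")
    case True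
    then have e: "(-1::real)^r = 1" by simp
    have tu: "tt (1/c) = t"
    proof -
      have "tt (1/c) = 27 * b^2 / (c^3 + 1)^2" using case_pos(1)[of c] c0 c1 by simp
      also have "\<dots> = 27 / L^2" using alg_l[OF X[unfolded e, symmetric] b0 L0] by simp
      finally show ?thesis unfolding t_def e by simp
    qed
    have S: "(\<lambda>k. cS k * t^(Suc k)) sums GG (1/c)"
    proof (cases "r = 0")
      case True
      then have "c = 1" using c0 by simp
      then have t4: "t = 27/4" using tu tt_one by simp
      show ?thesis unfolding t4 \<open>c = 1\<close> using boundary by simp
    next
      case False
      then have "c > 1" using c0 by simp
      then have u: "-1 < 1/c" "0 \<le> 1/c" "1/c < 1" by (auto simp: field_simps)
      have tb: "\<bar>tt (1/c)\<bar> < 27/4" using tt_pos_bound[OF u(2,3)] .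
      show ?thesis using sums_at[OF u(1) u(3) tb] tu by simp
    qed
    have X': "b * L = c^3 + 1" using X e by simp
    have G: "GG (1/c) = 6*(arctan(sqrt 3/(2*c - 1)))^2 - 1/2*(ln((c^3+1)/(c+1)^3))^2"
      using case_pos(2)[of c] c1 by simp
    have "(\<lambda>k. cS k * t^(Suc k)) sums (6 * (arctan (sqrt 3 / (2 * c - (-1) ^ r))) ^ 2
            - 1/2 * (ln (b * L / (c + (-1) ^ r) ^ 3)) ^ 2)"
      using S unfolding X' e G by simp
    then show ?thesis using T unfolding c_def b_def L_def by simp
  next
    case False
    then have e: "(-1::real)^r = -1" by simp
    have r2: "r \<ge> 2" using False r by (cases r) auto
    have c2: "c > 1" using c0 r2 by simp
    have u: "-1 < -1/c" "-1/c < 1" using c2 by (auto simp: field_simps)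
    have tu: "tt (-1/c) = t"
    proof -
      have "tt (-1/c) = - (27 * b^2 / (c^3 - 1)^2)" using case_neg(1)[OF c2] c0(2) by simp
      also have "\<dots> = - (27 / L^2)" using alg_l[OF X[unfolded e, symmetric] b0 L0] by simp
      finally show ?thesis unfolding t_def e by simp
    qed
    have tb: "\<bar>t\<bar> < 27/4"
    proof -
      have "L^2 \<ge> 3^2" using L1(2)[OF r2] by (intro power_mono) auto
      then have "\<bar>t\<bar> = 27 / L^2" "27 / L^2 \<le> 27 / 9" unfolding t_def
        by (auto simp: abs_mult power_abs divide_le_eq)
      then show ?thesis by simp
    qed
    have S: "(\<lambda>k. cS k * t^(Suc k)) sums GG (-1/c)"
      using sums_at[OF u] tu tb by simp
    have X': "b * L = c^3 - 1" using X e by simp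
    have G: "GG (-1/c) = 6*(arctan(sqrt 3/(2*c + 1)))^2 - 1/2*(ln((c^3-1)/(c-1)^3))^2"
      using case_neg(2)[OF c2] by simp
    have "(\<lambda>k. cS k * t^(Suc k)) sums (6 * (arctan (sqrt 3 / (2 * c - (-1) ^ r))) ^ 2
            - 1/2 * (ln (b * L / (c + (-1) ^ r) ^ 3)) ^ 2)"
      using S unfolding X' e G by simp
    then show ?thesis using T unfolding c_def b_def L_def by simp
  qed
qed

theorem theorem1:
  fixes r :: nat
  shows "(r \<noteq> 0 \<longrightarrow>
      (\<lambda>k. let n = Suc k in
         (-1) ^ (n * (r - 1)) * (27/5) ^ n /
         (real n ^ 2 * real (3 * n choose n) * real (fib r) ^ (2 * n)))
      sums (6 * (arctan (sqrt 3 / (2 * root 3 (golden_ratio ^ (2 * r)) + (-1) ^ r))) ^ 2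
            - 1/2 * (ln (sqrt 5 * golden_ratio ^ r * real (fib r) /
                        (root 3 (golden_ratio ^ (2 * r)) - (-1) ^ r) ^ 3)) ^ 2))
   \<and> (r \<noteq> 1 \<longrightarrow>
      (\<lambda>k. let n = Suc k in
         (-1) ^ (n * r) * 27 ^ n /
         (real n ^ 2 * real (3 * n choose n) * real (lucas r) ^ (2 * n)))
      sums (6 * (arctan (sqrt 3 / (2 * root 3 (golden_ratio ^ (2 * r)) - (-1) ^ r))) ^ 2
            - 1/2 * (ln (golden_ratio ^ r * real (lucas r) /
                        (root 3 (golden_ratio ^ (2 * r)) + (-1) ^ r) ^ 3)) ^ 2))"
  using fib_part lucas_part by blast

end
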